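(* Let $N$ be a composite number with $N=\prod_{i=1}^{a}p_i^{2n_i}\prod_{j=1}^{b}q_j^{2m_j+1}$, where $p_1,\ldots,p_a,q_1,\ldots,q_b$ are distinct primes, $n_i\geq 1$ and $m_j\geq 0$ are integers. Then $\omega(\Gamma_E(\mathbb{Z}_N))=\chi(\Gamma_E(\mathbb{Z}_N))=\prod_{i=1}^{a}(n_i+1)\prod_{j=1}^{b}(m_j+1)+b-1.$
   Context: $\mathbb{Z}_N$ is the ring of integers modulo $N$. For a finite commutative ring $R$ with unity, define $x\sim_R y$ iff $Ann(x)=Ann(y)$, with class $C_x$; the compressed zero-divisor graph $\Gamma_E(R)$ has as vertices the classes other than $C_0$ and $C_1$, with distinct $C_x,C_y$ adjacent iff $xy=0$. For $R=\mathbb{Z}_N$ the vertices of $\Gamma_E(\mathbb{Z}_N)$ correspond to the proper divisors $d$ of $N$ ($1<d<N$), two distinct ones $d,d'$ being adjacent iff $N\mid dd'$. $\omega$ is the clique number and $\chi$ the chromatic number. *)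

theory Defs
  imports "HOL-Computational_Algebra.Primes"
begin

text \<open>Compressed zero-divisor graph of Z_N: vertices are the proper divisors d of N
  (1 < d < N); distinct d, d' adjacent iff N divides d * d'.\<close>

definition zvert :: "nat \<Rightarrow> nat set" where
  "zvert N = {d. d dvd N \<and> 1 < d \<and> d < N}"

definition zadj :: "nat \<Rightarrow> nat \<Rightarrow> nat \<Rightarrow> bool" where
  "zadj N d d' \<longleftrightarrow> d \<in> zvert N \<and> d' \<in> zvert N \<and> d \<noteq> d' \<and> N dvd d * d'"

definition is_clique :: "nat \<Rightarrow> nat set \<Rightarrow> bool" where
  "is_clique N K \<longleftrightarrow> K \<subseteq> zvert N \<and> (\<forall>x\<in>K. \<forall>y\<in>K. x \<noteq> y \<longrightarrow> zadj N x y)"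

definition clique_number :: "nat \<Rightarrow> nat" where
  "clique_number N = Max {card K | K. is_clique N K}"

definition is_colouring :: "nat \<Rightarrow> nat \<Rightarrow> (nat \<Rightarrow> nat) \<Rightarrow> bool" where
  "is_colouring N k c \<longleftrightarrow> (\<forall>v\<in>zvert N. c v < k) \<and> (\<forall>u v. zadj N u v \<longrightarrow> c u \<noteq> c v)"

definition chromatic_number :: "nat \<Rightarrow> nat" where
  "chromatic_number N = (LEAST k. \<exists>c. is_colouring N k c)"

end

theory Submission
  imports Defs "HOL-Library.FuncSet"
begin

locale zd =
  fixes S :: "nat set" and e :: "nat \<Rightarrow> nat" and N :: nat
  assumes fin: "finite S" and pr: "\<And>p. p \<in> S \<Longrightarrow> prime p"
    and epos: "\<And>p. p \<in> S \<Longrightarrow> e p \<ge> 1"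
    and Ndef: "N = (\<Prod>p\<in>S. p ^ e p)"
    and N1: "N > 1" and Nnp: "\<not> prime N"
begin

definition mk :: "(nat \<Rightarrow> nat) \<Rightarrow> nat" where
  "mk f = (\<Prod>p\<in>S. p ^ f p)"

definition h :: "nat \<Rightarrow> nat" where "h p = (e p + 1) div 2"

lemma mk_pos: "mk f > 0"
  unfolding mk_def using pr by (metis fin prime_gt_0_nat prod_pos zero_less_power)

lemma mult_mk: "prime p \<Longrightarrow> multiplicity p (mk f) = (if p \<in> S then f p else 0)"
  unfolding mk_def by (rule multiplicity_prod_prime_powers[OF fin pr])

lemma N_mk: "N = mk e" unfolding mk_def Ndef ..

lemma multN: "prime p \<Longrightarrow> multiplicity p N = (if p \<in> S then e p else 0)"
  using mult_mk N_mk by simp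

lemma Npos: "N > 0" using N1 by simp

lemma mk_dvd: "(\<And>p. p \<in> S \<Longrightarrow> f p \<le> e p) \<Longrightarrow> mk f dvd N"
  apply (rule multiplicity_le_imp_dvd)
  using mk_pos apply simp
  by (simp add: mult_mk multN)

lemma dvd_mult_le: "x dvd N \<Longrightarrow> p \<in> S \<Longrightarrow> multiplicity p x \<le> e p"
  using dvd_imp_multiplicity_le[of x N p] Npos multN pr by auto

lemma dvd_mult0: "x dvd N \<Longrightarrow> prime p \<Longrightarrow> p \<notin> S \<Longrightarrow> multiplicity p x = 0"
  using dvd_imp_multiplicity_le[of x N p] Npos multN by auto

lemma dvd_pos: "x dvd N \<Longrightarrow> x > 0" using Npos by (cases "x = 0") auto

lemma dvd_eq: "x dvd N \<Longrightarrow> y dvd N \<Longrightarrow> (\<And>p. p \<in> S \<Longrightarrow> multiplicity p x = multiplicity p y) \<Longrightarrow> x = y"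
proof -
  assume a: "x dvd N" "y dvd N" "\<And>p. p \<in> S \<Longrightarrow> multiplicity p x = multiplicity p y"
  have "normalize x = normalize y"
  proof (rule multiplicity_eq_imp_eq)
    show "x \<noteq> 0" "y \<noteq> 0" using dvd_pos a by auto
    fix p :: nat assume "prime p"
    then show "multiplicity p x = multiplicity p y" using a dvd_mult0[of x p] dvd_mult0[of y p]
      by (cases "p \<in> S") auto
  qed
  then show "x = y" by simp
qed

lemma dvd_mk: "x dvd N \<Longrightarrow> x = mk (\<lambda>p. multiplicity p x)"
  apply (rule dvd_eq)
  apply simp
  apply (rule mk_dvd) using dvd_mult_le apply simp
  using mult_mk pr by simp

lemma Ndvd_iff: "x > 0 \<Longrightarrow> y > 0 \<Longrightarrow> N dvd x * y \<longleftrightarrow> (\<forall>p\<in>S. e p \<le> multiplicity p x + multiplicity p y)"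
proof
  assume a: "x > 0" "y > 0" "N dvd x * y"
  show "\<forall>p\<in>S. e p \<le> multiplicity p x + multiplicity p y"
  proof
    fix p assume p: "p \<in> S"
    have "multiplicity p N \<le> multiplicity p (x*y)" using a by (intro dvd_imp_multiplicity_le) auto
    then show "e p \<le> multiplicity p x + multiplicity p y" using p pr multN a
      by (simp add: prime_elem_multiplicity_mult_distrib)
  qed
next
  assume a: "x > 0" "y > 0" "\<forall>p\<in>S. e p \<le> multiplicity p x + multiplicity p y"
  show "N dvd x * y"
    apply (rule multiplicity_le_imp_dvd)
    using Npos apply simp
    using a by (simp add: multN prime_elem_multiplicity_mult_distrib)
qed


lemma Sne: "S \<noteq> {}" using N1 Ndef by auto

lemma h_le: "p \<in> S \<Longrightarrow> h p \<le> e p" using epos[of p] unfolding h_def by simp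

definition BB :: "nat set" where
  "BB = {d. d dvd N \<and> (\<forall>p\<in>S. h p \<le> multiplicity p d)}"

lemma mk_restrict: "mk (restrict f S) = mk f"
  unfolding mk_def by (rule prod.cong) auto

lemma bij_BB: "bij_betw mk (PiE S (\<lambda>p. {h p..e p})) BB"
proof (rule bij_betw_imageI)
  show "inj_on mk (PiE S (\<lambda>p. {h p..e p}))"
  proof (rule inj_onI)
    fix f g assume f: "f \<in> PiE S (\<lambda>p. {h p..e p})" and g: "g \<in> PiE S (\<lambda>p. {h p..e p})"
      and eq: "mk f = mk g"
    show "f = g"
    proof (rule PiE_ext[OF f g])
      fix i assume "i \<in> S"
      then show "f i = g i" using mult_mk[of i f] mult_mk[of i g] eq pr by simp
    qed
  qed
  show "mk ` PiE S (\<lambda>p. {h p..e p}) = BB"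
  proof
    show "mk ` PiE S (\<lambda>p. {h p..e p}) \<subseteq> BB"
    proof
      fix x assume "x \<in> mk ` PiE S (\<lambda>p. {h p..e p})"
      then obtain f where f: "f \<in> PiE S (\<lambda>p. {h p..e p})" and x: "x = mk f" by auto
      have "mk f dvd N" using f by (intro mk_dvd) auto
      moreover have "\<forall>p\<in>S. h p \<le> multiplicity p (mk f)" using f pr mult_mk by auto
      ultimately show "x \<in> BB" using x unfolding BB_def by auto
    qed
    show "BB \<subseteq> mk ` PiE S (\<lambda>p. {h p..e p})"
    proof
      fix d assume d: "d \<in> BB"
      then have dd: "d dvd N" unfolding BB_def by auto
      have "restrict (\<lambda>p. multiplicity p d) S \<in> PiE S (\<lambda>p. {h p..e p})"
        using d dvd_mult_le[OF dd] unfolding BB_def by auto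
      moreover have "d = mk (restrict (\<lambda>p. multiplicity p d) S)"
        using dvd_mk[OF dd] mk_restrict by simp
      ultimately show "d \<in> mk ` PiE S (\<lambda>p. {h p..e p})" by blast
    qed
  qed
qed

lemma card_BB: "card BB = (\<Prod>p\<in>S. e p + 1 - h p)"
proof -
  have "card BB = card (PiE S (\<lambda>p. {h p..e p}))" using bij_betw_same_card[OF bij_BB] by simp
  also have "\<dots> = (\<Prod>p\<in>S. card {h p..e p})" by (rule card_PiE[OF fin])
  finally show ?thesis by simp
qed

lemma N_BB: "N \<in> BB" using h_le multN pr unfolding BB_def by auto

definition B :: "nat set" where "B = BB - {N}"

lemma finBB: "finite BB"
proof -
  have "BB \<subseteq> {..N}" unfolding BB_def using Npos by (auto intro: dvd_imp_le)
  then show ?thesis using finite_subset by blast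
qed

lemma card_B: "card B = card BB - 1"
  unfolding B_def using N_BB finBB by simp

definition big :: "nat \<Rightarrow> bool" where "big d \<longleftrightarrow> (\<forall>p\<in>S. h p \<le> multiplicity p d)"
definition deep :: "nat \<Rightarrow> bool" where "deep d \<longleftrightarrow> (\<exists>p\<in>S. multiplicity p d < e p div 2)"
definition g :: "nat \<Rightarrow> nat" where "g d = mk (\<lambda>p. max (multiplicity p d) (h p))"
definition col :: "nat \<Rightarrow> nat" where
  "col d = (if big d then d else if deep d then g d
            else N + (LEAST q. q \<in> S \<and> multiplicity q d < h q))"
definition Q' :: "nat set" where "Q' = {q\<in>S. odd (e q)}"
definition C :: "nat set" where "C = B \<union> (\<lambda>q. N + q) ` Q'"
definition dq :: "nat \<Rightarrow> nat" where "dq q = mk (e(q := e q div 2))"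
definition K :: "nat set" where "K = B \<union> dq ` Q'"

lemma deep_not_big: "deep d \<Longrightarrow> \<not> big d"
  unfolding deep_def big_def h_def by force

lemma vert_dvd: "d \<in> zvert N \<Longrightarrow> d dvd N" unfolding zvert_def by auto
lemma vert_pos: "d \<in> zvert N \<Longrightarrow> d > 0" unfolding zvert_def by auto
lemma vert_lt: "d \<in> zvert N \<Longrightarrow> d < N" unfolding zvert_def by auto

lemma g_mult: "p \<in> S \<Longrightarrow> multiplicity p (g d) = max (multiplicity p d) (h p)"
  unfolding g_def using mult_mk pr by simp

lemma g_B: assumes "d \<in> zvert N" "deep d" shows "g d \<in> B"
proof -
  have gd: "g d dvd N" unfolding g_def
    using dvd_mult_le[OF vert_dvd[OF assms(1)]] h_le by (intro mk_dvd) auto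
  have gBB: "g d \<in> BB" unfolding BB_def using gd g_mult by auto
  obtain p where p: "p \<in> S" "multiplicity p d < e p div 2" using assms(2) deep_def by auto
  have "multiplicity p (g d) = h p" using g_mult[OF p(1)] p(2) unfolding h_def by simp
  moreover have "h p < e p" using p(2) unfolding h_def by simp
  ultimately have "g d \<noteq> N" using multN[of p] p pr by auto
  then show ?thesis using gBB unfolding B_def by auto
qed

lemma B_lt: "x \<in> B \<Longrightarrow> x < N"
  unfolding B_def BB_def using Npos by (auto intro: dvd_imp_le simp: le_neq_implies_less)

lemma col_lt: "d \<in> zvert N \<Longrightarrow> big d \<or> deep d \<Longrightarrow> col d < N"
  using g_B B_lt vert_lt unfolding col_def by auto

lemma col_ge: "\<not> big d \<Longrightarrow> \<not> deep d \<Longrightarrow> col d \<ge> N"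
  unfolding col_def by auto

lemma col_in: assumes "d \<in> zvert N" shows "col d \<in> C"
proof (cases "big d")
  case True
  then have "d \<in> B" using assms unfolding B_def BB_def big_def zvert_def by auto
  then show ?thesis using True unfolding col_def C_def by auto
next
  case nb: False
  show ?thesis
  proof (cases "deep d")
    case True
    then show ?thesis using g_B[OF assms True] nb unfolding col_def C_def by auto
  next
    case False
    have ex: "\<exists>q. q \<in> S \<and> multiplicity q d < h q" using nb unfolding big_def by auto
    define q where "q = (LEAST q. q \<in> S \<and> multiplicity q d < h q)"
    have q: "q \<in> S \<and> multiplicity q d < h q" unfolding q_def by (rule LeastI_ex[OF ex])
    have "multiplicity q d \<ge> e q div 2" using False q unfolding deep_def by auto
    then have "e q div 2 < (e q + 1) div 2" using q unfolding h_def by linarith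
    then have "odd (e q)" by presburger
    then have "q \<in> Q'" using q unfolding Q'_def by auto
    then show ?thesis using nb False unfolding col_def C_def q_def by auto
  qed
qed

lemma adj_mult: "zadj N u v \<Longrightarrow> p \<in> S \<Longrightarrow> e p \<le> multiplicity p u + multiplicity p v"
  unfolding zadj_def using Ndvd_iff vert_pos by auto

lemma adj_sym: "zadj N u v \<Longrightarrow> zadj N v u" unfolding zadj_def by (auto simp: mult.commute)

lemma deep_case: assumes a: "zadj N u v" and du: "deep u" shows "col u \<noteq> col v"
proof -
  have uV: "u \<in> zvert N" and vV: "v \<in> zvert N" using a unfolding zadj_def by auto
  obtain p where p: "p \<in> S" "multiplicity p u < e p div 2" using du deep_def by auto
  have gu: "multiplicity p (g u) = h p" using g_mult[OF p(1)] p(2) unfolding h_def by simp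
  have mv: "multiplicity p v > h p" using adj_mult[OF a p(1)] p(2) unfolding h_def by linarith
  have cu: "col u = g u" using du deep_not_big unfolding col_def by auto
  show ?thesis
  proof (cases "big v")
    case True
    then have "col v = v" unfolding col_def by auto
    then show ?thesis using cu gu mv by auto
  next
    case nb: False
    show ?thesis
    proof (cases "deep v")
      case True
      then have "col v = g v" using nb unfolding col_def by auto
      then show ?thesis using cu gu mv g_mult[OF p(1), of v] by auto
    next
      case False
      then show ?thesis using col_ge[OF nb False] col_lt[OF uV] du by auto
    qed
  qed
qed

lemma col_proper: assumes a: "zadj N u v" shows "col u \<noteq> col v"
proof -
  have uV: "u \<in> zvert N" and vV: "v \<in> zvert N" and uv: "u \<noteq> v" using a unfolding zadj_def by auto
  show ?thesis
  proof (cases "deep u")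
    case True then show ?thesis using deep_case[OF a] by auto
  next
    case ndu: False
    show ?thesis
    proof (cases "deep v")
      case True then show ?thesis using deep_case[OF adj_sym[OF a]] by auto
    next
      case ndv: False
      show ?thesis
      proof (cases "big u")
        case bu: True
        show ?thesis
        proof (cases "big v")
          case True then show ?thesis using bu uv unfolding col_def by auto
        next
          case False then show ?thesis using col_ge[OF False ndv] col_lt[OF uV] bu by auto
        qed
      next
        case nbu: False
        show ?thesis
        proof (cases "big v")
          case True then show ?thesis using col_ge[OF nbu ndu] col_lt[OF vV] by auto
        next
          case nbv: False
          have exu: "\<exists>q. q \<in> S \<and> multiplicity q u < h q" using nbu unfolding big_def by auto
          have exv: "\<exists>q. q \<in> S \<and> multiplicity q v < h q" using nbv unfolding big_def by auto
          define qu where "qu = (LEAST q. q \<in> S \<and> multiplicity q u < h q)"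
          define qv where "qv = (LEAST q. q \<in> S \<and> multiplicity q v < h q)"
          have qu: "qu \<in> S \<and> multiplicity qu u < h qu" unfolding qu_def by (rule LeastI_ex[OF exu])
          have qv: "qv \<in> S \<and> multiplicity qv v < h qv" unfolding qv_def by (rule LeastI_ex[OF exv])
          have cu: "col u = N + qu" using nbu ndu unfolding col_def qu_def by auto
          have cv: "col v = N + qv" using nbv ndv unfolding col_def qv_def by auto
          show ?thesis
          proof
            assume "col u = col v"
            then have "qu = qv" using cu cv by simp
            then have m1: "multiplicity qu u < h qu" and m2: "multiplicity qu v < h qu"
              and m3: "e qu \<le> multiplicity qu u + multiplicity qu v"
              using qu qv adj_mult[OF a, of qu] by auto
            have "2 * h qu \<le> e qu + 1" unfolding h_def by simp
            then show False using m1 m2 m3 by linarith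
          qed
        qed
      qed
    qed
  qed
qed


lemma finB: "finite B" unfolding B_def using finBB by simp
lemma finQ': "finite Q'" unfolding Q'_def using fin by simp
lemma finC: "finite C" unfolding C_def using finB finQ' by simp

lemma B_BB: "x \<in> B \<Longrightarrow> x \<in> BB" unfolding B_def by auto

lemma B_zvert: "B \<subseteq> zvert N"
proof
  fix d assume d: "d \<in> B"
  then have dd: "d dvd N" and dN: "d \<noteq> N" and m: "\<forall>p\<in>S. h p \<le> multiplicity p d"
    unfolding B_def BB_def by auto
  obtain p where p: "p \<in> S" using Sne by auto
  have "h p \<ge> 1" using epos[OF p] unfolding h_def by simp
  then have "d \<noteq> 1" using m p by auto
  moreover have "d > 0" using dvd_pos[OF dd] .
  moreover have "d \<le> N" using dd Npos by (simp add: dvd_imp_le)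
  ultimately show "d \<in> zvert N" unfolding zvert_def using dd dN by auto
qed

lemma dq_mult: "q \<in> S \<Longrightarrow> p \<in> S \<Longrightarrow> multiplicity p (dq q) = (if p = q then e q div 2 else e p)"
  unfolding dq_def using mult_mk pr by simp

lemma dq_dvd: "q \<in> S \<Longrightarrow> dq q dvd N"
  unfolding dq_def by (rule mk_dvd) auto

lemma Q'_S: "q \<in> Q' \<Longrightarrow> q \<in> S" unfolding Q'_def by auto

lemma dq_zvert: assumes q: "q \<in> Q'" shows "dq q \<in> zvert N"
proof -
  have qS: "q \<in> S" and oq: "odd (e q)" using q unfolding Q'_def by auto
  have dvd: "dq q dvd N" using dq_dvd[OF qS] .
  have "multiplicity q (dq q) \<noteq> multiplicity q N"
    using dq_mult[OF qS qS] multN[of q] pr[OF qS] qS epos[OF qS] by simp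
  then have ne: "dq q \<noteq> N" by auto
  have n1: "dq q \<noteq> 1"
  proof
    assume d1: "dq q = 1"
    have "\<forall>p\<in>S. p = q"
    proof
      fix p assume p: "p \<in> S"
      show "p = q"
      proof (rule ccontr)
        assume "p \<noteq> q"
        then have "multiplicity p (dq q) = e p" using dq_mult[OF qS p] by simp
        then show False using d1 epos[OF p] by simp
      qed
    qed
    then have S1: "S = {q}" using qS by blast
    have "e q div 2 = 0" using dq_mult[OF qS qS] d1 by simp
    then have "e q = 1" using oq by (auto elim!: oddE)
    then have "N = q" using S1 Ndef by simp
    then show False using Nnp pr[OF qS] by simp
  qed
  have "dq q > 0" using dvd_pos[OF dvd] .
  moreover have "dq q \<le> N" using dvd Npos by (simp add: dvd_imp_le)
  ultimately show ?thesis unfolding zvert_def using dvd ne n1 by auto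
qed

lemma dq_notB: assumes q: "q \<in> Q'" shows "dq q \<notin> B"
proof
  assume "dq q \<in> B"
  then have "h q \<le> multiplicity q (dq q)" using Q'_S[OF q] unfolding B_def BB_def by auto
  moreover have "multiplicity q (dq q) = e q div 2" using dq_mult Q'_S[OF q] by simp
  moreover have "odd (e q)" using q unfolding Q'_def by auto
  ultimately show False unfolding h_def by (auto elim!: oddE)
qed

lemma dq_inj: "inj_on dq Q'"
proof (rule inj_onI)
  fix q q' assume q: "q \<in> Q'" and q': "q' \<in> Q'" and eq: "dq q = dq q'"
  show "q = q'"
  proof (rule ccontr)
    assume ne: "q \<noteq> q'"
    have "multiplicity q (dq q) = e q div 2" using dq_mult Q'_S[OF q] by simp
    moreover have "multiplicity q (dq q') = e q" using dq_mult Q'_S[OF q] Q'_S[OF q'] ne by simp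
    ultimately show False using eq epos[OF Q'_S[OF q]] by simp
  qed
qed

lemma card_K: "card K = card C"
proof -
  have "card K = card B + card (dq ` Q')"
    unfolding K_def using finB finQ' dq_notB by (intro card_Un_disjoint) auto
  also have "card (dq ` Q') = card Q'" using dq_inj by (rule card_image)
  also have "card C = card B + card ((\<lambda>q. N + q) ` Q')"
    unfolding C_def using finB finQ' B_lt by (intro card_Un_disjoint) auto
  moreover have "card ((\<lambda>q. N + q) ` Q') = card Q'" by (rule card_image) (simp add: inj_on_def)
  ultimately show ?thesis by simp
qed

lemma K_clique: "is_clique N K"
  unfolding is_clique_def
proof (intro conjI ballI impI)
  show KV: "K \<subseteq> zvert N" unfolding K_def using B_zvert dq_zvert by auto
  fix x y assume x: "x \<in> K" and y: "y \<in> K" and xy: "x \<noteq> y"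
  have xV: "x \<in> zvert N" and yV: "y \<in> zvert N" using x y KV by auto
  have hh: "\<And>p. e p \<le> h p + h p" "\<And>p. h p + e p div 2 = e p" unfolding h_def by presburger+
  have "\<forall>p\<in>S. e p \<le> multiplicity p x + multiplicity p y"
  proof
    fix p assume p: "p \<in> S"
    show "e p \<le> multiplicity p x + multiplicity p y"
    proof (cases "x \<in> B")
      case xB: True
      have mx: "h p \<le> multiplicity p x" using xB p unfolding B_def BB_def by auto
      show ?thesis
      proof (cases "y \<in> B")
        case True
        have "h p \<le> multiplicity p y" using True p unfolding B_def BB_def by auto
        then show ?thesis using mx hh(1)[of p] by linarith
      next
        case False
        then obtain q where q: "q \<in> Q'" "y = dq q" using y unfolding K_def by auto
        then show ?thesis using mx hh(2)[of p] dq_mult[OF Q'_S[OF q(1)] p]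
          by (cases "p = q") auto
      qed
    next
      case xB: False
      then obtain q where q: "q \<in> Q'" "x = dq q" using x unfolding K_def by auto
      show ?thesis
      proof (cases "y \<in> B")
        case True
        have my: "h p \<le> multiplicity p y" using True p unfolding B_def BB_def by auto
        then show ?thesis using hh(2)[of p] dq_mult[OF Q'_S[OF q(1)] p] q
          by (cases "p = q") auto
      next
        case False
        then obtain q' where q': "q' \<in> Q'" "y = dq q'" using y unfolding K_def by auto
        have "q \<noteq> q'" using q q' xy by auto
        then show ?thesis using dq_mult[OF Q'_S[OF q(1)] p] dq_mult[OF Q'_S[OF q'(1)] p] q q'
          by (cases "p = q") auto
      qed
    qed
  qed
  then have "N dvd x * y" using Ndvd_iff vert_pos[OF xV] vert_pos[OF yV] by auto
  then show "zadj N x y" unfolding zadj_def using xV yV xy by auto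
qed

lemma clique_bound: "is_colouring N k c \<Longrightarrow> is_clique N A \<Longrightarrow> card A \<le> k"
proof -
  assume c: "is_colouring N k c" and A: "is_clique N A"
  have "inj_on c A"
    using c A unfolding is_colouring_def is_clique_def inj_on_def by blast
  moreover have "c ` A \<subseteq> {0..<k}" using c A unfolding is_colouring_def is_clique_def by auto
  ultimately have "card A \<le> card {0..<k}" by (intro card_inj_on_le) auto
  then show ?thesis by simp
qed

lemma main: "clique_number N = card C \<and> chromatic_number N = card C"
proof -
  obtain hb where hb: "bij_betw hb C {0..<card C}" using ex_bij_betw_finite_nat[OF finC] by blast
  define c where "c = hb \<circ> col"
  have col: "is_colouring N (card C) c"
    unfolding is_colouring_def
  proof (intro conjI ballI allI impI)
    fix v assume "v \<in> zvert N"
    then show "c v < card C" using col_in hb unfolding c_def bij_betw_def by auto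
  next
    fix u v assume a: "zadj N u v"
    then have "u \<in> zvert N" "v \<in> zvert N" unfolding zadj_def by auto
    then have "col u \<in> C" "col v \<in> C" using col_in by auto
    then show "c u \<noteq> c v" using col_proper[OF a] hb unfolding c_def bij_betw_def inj_on_def by auto
  qed
  have "clique_number N = card C"
    unfolding clique_number_def
  proof (rule Max_eqI)
    have "{card K' |K'. is_clique N K'} \<subseteq> {..card C}" using clique_bound[OF col] by auto
    then show "finite {card K' |K'. is_clique N K'}" using finite_subset by blast
    show "\<And>y. y \<in> {card K' |K'. is_clique N K'} \<Longrightarrow> y \<le> card C"
      using clique_bound[OF col] by auto
    have "card K \<in> {card K' |K'. is_clique N K'}" using K_clique by blast
    then show "card C \<in> {card K' |K'. is_clique N K'}" using card_K by simp
  qed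
  moreover have "chromatic_number N = card C"
    unfolding chromatic_number_def
  proof (rule Least_equality)
    show "\<exists>c. is_colouring N (card C) c" using col by blast
    fix y assume "\<exists>c. is_colouring N y c"
    then obtain c' where "is_colouring N y c'" by blast
    then have "card K \<le> y" by (rule clique_bound[OF _ K_clique])
    then show "card C \<le> y" using card_K by simp
  qed
  ultimately show ?thesis by simp
qed

lemma card_C: "card C = (\<Prod>p\<in>S. e p + 1 - h p) - 1 + card Q'"
proof -
  have "card C = card B + card ((\<lambda>q. N + q) ` Q')"
    unfolding C_def using finB finQ' B_lt by (intro card_Un_disjoint) auto
  moreover have "card ((\<lambda>q. N + q) ` Q') = card Q'" by (rule card_image) (simp add: inj_on_def)
  ultimately show ?thesis using card_B card_BB by simp
qed

end

theorem lemma5p1: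
  fixes N :: nat and P Q :: "nat set" and n m :: "nat \<Rightarrow> nat"
  assumes "finite P" and "finite Q" and "P \<inter> Q = {}"
    and "\<forall>p\<in>P. prime p" and "\<forall>q\<in>Q. prime q"
    and "\<forall>p\<in>P. n p \<ge> 1"
    and "N = (\<Prod>p\<in>P. p ^ (2 * n p)) * (\<Prod>q\<in>Q. q ^ (2 * m q + 1))"
    and "N > 1" and "\<not> prime N"
  shows "int (clique_number N) = (\<Prod>p\<in>P. int (n p + 1)) * (\<Prod>q\<in>Q. int (m q + 1)) + int (card Q) - 1
         \<and> chromatic_number N = clique_number N"
proof -
  define S where "S = P \<union> Q"
  define e where "e = (\<lambda>p. if p \<in> P then 2 * n p else 2 * m p + 1)"
  have finS: "finite S" using assms(1,2) unfolding S_def by simp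
  have PQ: "\<And>q. q \<in> Q \<Longrightarrow> q \<notin> P" using assms(3) by blast
  have NS: "N = (\<Prod>p\<in>S. p ^ e p)"
  proof -
    have "(\<Prod>p\<in>S. p ^ e p) = (\<Prod>p\<in>P. p ^ e p) * (\<Prod>p\<in>Q. p ^ e p)"
      unfolding S_def using assms(1,2,3) by (rule prod.union_disjoint)
    also have "(\<Prod>p\<in>P. p ^ e p) = (\<Prod>p\<in>P. p ^ (2 * n p))"
      unfolding e_def by (rule prod.cong) auto
    also have "(\<Prod>p\<in>Q. p ^ e p) = (\<Prod>q\<in>Q. q ^ (2 * m q + 1))"
      unfolding e_def using PQ by (intro prod.cong) auto
    finally show ?thesis using assms(7) by simp
  qed
  interpret z: zd S e N
  proof
    show "finite S" by (rule finS)
    show "\<And>p. p \<in> S \<Longrightarrow> prime p" using assms(4,5) unfolding S_def by auto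
    show "\<And>p. p \<in> S \<Longrightarrow> 1 \<le> e p" using assms(6) unfolding S_def e_def by auto
    show "N = (\<Prod>p\<in>S. p ^ e p)" by (rule NS)
    show "1 < N" by (rule assms(8))
    show "\<not> prime N" by (rule assms(9))
  qed
  have Q'Q: "z.Q' = Q"
  proof -
    have "z.Q' = {q\<in>S. odd (e q)}" by (rule z.Q'_def)
    also have "\<dots> = Q" unfolding S_def e_def using PQ by auto
    finally show ?thesis .
  qed
  have prodS: "(\<Prod>p\<in>S. e p + 1 - z.h p) = (\<Prod>p\<in>P. n p + 1) * (\<Prod>q\<in>Q. m q + 1)"
  proof -
    have "(\<Prod>p\<in>S. e p + 1 - z.h p) = (\<Prod>p\<in>P. e p + 1 - z.h p) * (\<Prod>p\<in>Q. e p + 1 - z.h p)"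
      unfolding S_def using assms(1,2,3) by (rule prod.union_disjoint)
    also have "(\<Prod>p\<in>P. e p + 1 - z.h p) = (\<Prod>p\<in>P. n p + 1)"
    proof (rule prod.cong)
      fix p assume p: "p \<in> P"
      have ep: "e p = 2 * n p" using p unfolding e_def by simp
      have "z.h p = (e p + 1) div 2" by (rule z.h_def)
      then have "z.h p = n p" using ep by simp
      then show "e p + 1 - z.h p = n p + 1" using ep by simp
    qed simp
    also have "(\<Prod>p\<in>Q. e p + 1 - z.h p) = (\<Prod>q\<in>Q. m q + 1)"
    proof (rule prod.cong)
      fix p assume p: "p \<in> Q"
      have ep: "e p = 2 * m p + 1" using p PQ unfolding e_def by simp
      have "z.h p = (e p + 1) div 2" by (rule z.h_def)
      then have "z.h p = m p + 1" using ep by simp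
      then show "e p + 1 - z.h p = m p + 1" using ep by simp
    qed simp
    finally show ?thesis .
  qed
  have pos: "(\<Prod>p\<in>P. n p + 1) * (\<Prod>q\<in>Q. m q + 1) \<ge> 1"
    by (simp add: Suc_le_eq prod_pos)
  have cC: "card z.C = (\<Prod>p\<in>P. n p + 1) * (\<Prod>q\<in>Q. m q + 1) - 1 + card Q"
    using z.card_C Q'Q prodS by simp
  define A where "A = (\<Prod>p\<in>P. n p + 1) * (\<Prod>q\<in>Q. m q + 1)"
  have A1: "A \<ge> 1" using pos unfolding A_def .
  have cA: "card z.C = A - 1 + card Q" using cC unfolding A_def .
  have "int (card z.C) = int A - 1 + int (card Q)" using A1 cA by linarith
  also have "int A = (\<Prod>p\<in>P. int (n p + 1)) * (\<Prod>q\<in>Q. int (m q + 1))"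
    unfolding A_def by (simp only: of_nat_mult of_nat_prod)
  finally show ?thesis using z.main by linarith
qed

end
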